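(* Let $M=\{M_\gamma\}_{\gamma\in\Gamma}$ and $N=\{N_\omega\}_{\omega\in\Omega}$ be defining families of functions on $\mathbb R^{k_1}$ and $\mathbb R^{k_2}$ respectively, and let $h\in\mathcal K(M\otimes N)$. Suppose $N$ satisfies: (I) for every $\omega\in\Omega$ there exist $\omega'\in\Omega$ and a bounded integrable nonnegative function $L$ on $\mathbb R^{k_2}$ with $N_\omega\le LN_{\omega'}$ and $L(y)\to0$ as $|y|\to\infty$; (II) for every $\omega\in\Omega$ there exist $\omega'\in\Omega$, a neighborhood $B$ of the origin in $\mathbb R^{k_2}$ and $C>0$ with $N_\omega(y)\le CN_{\omega'}(y+y')$ for all $y\in\mathbb R^{k_2}$, $y'\in B$. Then $h(x,\cdot)\in\mathcal K(N)$ for every $x\in\mathbb R^{k_1}$, and for every $v\in\mathcal K'(N)$ the function $h_v(x)=\langle v,h(x,\cdot)\rangle$ belongs to $\mathcal K(M)$. Moreover, for every multi-index $\mu\in\mathbb Z_+^{k_1}$, $\partial^\mu h_v(x)=\langle v,\partial^\mu_x h(x,\cdot)\rangle$.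
   Context: A defining family of functions on $\mathbb R^k$ is a family $M=\{M_\gamma\}_{\gamma\in\Gamma}$ of nonnegative measurable functions on $\mathbb R^k$, each bounded on bounded subsets of $\mathbb R^k$, such that: (a) for all $\gamma_1,\gamma_2\in\Gamma$ there are $\gamma\in\Gamma$ and $C>0$ with $M_\gamma\ge C(M_{\gamma_1}+M_{\gamma_2})$; (b) there is a countable $\Gamma'\subset\Gamma$ such that for every $\gamma\in\Gamma$ there are $\gamma'\in\Gamma'$ and $C>0$ with $CM_\gamma\le M_{\gamma'}$; (c) for every $x\in\mathbb R^k$ there are $\gamma\in\Gamma$, a neighborhood $O(x)$ of $x$ and $C>0$ with $M_\gamma(x')\ge C$ for all $x'\in O(x)$. $\mathcal K(M)$ is the space of smooth functions $f$ on $\mathbb R^k$ with finite seminorms $\|f\|_{\gamma,m}=\sup_{x\in\mathbb R^k,|\mu|\le m}M_\gamma(x)|\partial^\mu f(x)|$ for all $\gamma\in\Gamma$, $m\in\mathbb Z_+$, topologized by these seminorms; $\mathcal K'(N)$ is the continuous dual of $\mathcal K(N)$ and $\langle\cdot,\cdot\rangle$ the dual pairing. $M\otimes N$ is the family $\{(M\otimes N)_{\gamma\omega}\}_{(\gamma,\omega)\in\Gamma\times\Omega}$ on $\mathbb R^{k_1+k_2}$ given by $(M\otimes N)_{\gamma\omega}(x,y)=M_\gamma(x)N_\omega(y)$ (it is a defining family on $\mathbb R^{k_1+k_2}$). *)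

theory Defs
  imports "HOL-Analysis.Analysis"
begin

text \<open>Functions on R^n are modelled as functions on real^'n ('n a finite index type).
 Test functions are complex valued.\<close>

definition dpart :: "'n::finite \<Rightarrow> (real^'n \<Rightarrow> 'b::real_normed_vector) \<Rightarrow> real^'n \<Rightarrow> 'b" where
  "dpart i f x = vector_derivative (\<lambda>t::real. f (x + t *\<^sub>R axis i (1::real))) (at 0)"

fun diter :: "'n::finite list \<Rightarrow> (real^'n \<Rightarrow> 'b::real_normed_vector) \<Rightarrow> real^'n \<Rightarrow> 'b" where
  "diter [] f = f"
| "diter (i # ds) f = dpart i (diter ds f)"

definition smooth_fun :: "(real^'n::finite \<Rightarrow> 'b::real_normed_vector) \<Rightarrow> bool" where
  "smooth_fun f \<longleftrightarrow> (\<forall>ds. continuous_on UNIV (diter ds f) \<and>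
      (\<forall>i x. (\<lambda>t::real. diter ds f (x + t *\<^sub>R axis i (1::real))) differentiable (at 0)))"

text \<open>Partial derivative for a multi-index mu :: 'n => nat (order irrelevant for smooth f).\<close>
definition dmulti :: "('n::finite \<Rightarrow> nat) \<Rightarrow> (real^'n \<Rightarrow> 'b::real_normed_vector) \<Rightarrow> real^'n \<Rightarrow> 'b" where
  "dmulti mu f = diter (SOME ds. \<forall>i. count_list ds i = mu i) f"

definition mi_abs :: "('n::finite \<Rightarrow> nat) \<Rightarrow> nat" where
  "mi_abs mu = (\<Sum>i\<in>UNIV. mu i)"

definition defining_family :: "('g \<Rightarrow> real^'n::finite \<Rightarrow> real) \<Rightarrow> bool" where
  "defining_family M \<longleftrightarrow>
     (\<forall>g x. 0 \<le> M g x) \<and>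
     (\<forall>g. M g \<in> borel_measurable lborel) \<and>
     (\<forall>g S. bounded S \<longrightarrow> bounded (M g ` S)) \<and>
     (\<forall>g1 g2. \<exists>g C. C > 0 \<and> (\<forall>x. M g x \<ge> C * (M g1 x + M g2 x))) \<and>
     (\<exists>G'. countable G' \<and> (\<forall>g. \<exists>g'\<in>G'. \<exists>C>0. \<forall>x. C * M g x \<le> M g' x)) \<and>
     (\<forall>x. \<exists>g U C. open U \<and> x \<in> U \<and> C > 0 \<and> (\<forall>x'\<in>U. M g x' \<ge> C))"

definition seminorm_K :: "('g \<Rightarrow> real^'n::finite \<Rightarrow> real) \<Rightarrow> 'g \<Rightarrow> nat \<Rightarrow> (real^'n \<Rightarrow> complex) \<Rightarrow> real" where
  "seminorm_K M g m f = Sup {M g x * norm (dmulti mu f x) | x mu. mi_abs mu \<le> m}"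

definition in_K :: "('g \<Rightarrow> real^'n::finite \<Rightarrow> real) \<Rightarrow> (real^'n \<Rightarrow> complex) \<Rightarrow> bool" where
  "in_K M f \<longleftrightarrow> smooth_fun f \<and>
     (\<forall>g m. bdd_above {M g x * norm (dmulti mu f x) | x mu. mi_abs mu \<le> m})"

text \<open>Continuous linear functionals on K(N): linear, and continuous for the locally
 convex topology given by the seminorms, i.e. bounded by finitely many seminorms.\<close>
definition in_K_dual :: "('g \<Rightarrow> real^'n::finite \<Rightarrow> real) \<Rightarrow> ((real^'n \<Rightarrow> complex) \<Rightarrow> complex) \<Rightarrow> bool" where
  "in_K_dual N v \<longleftrightarrow>
     (\<forall>f g. in_K N f \<longrightarrow> in_K N g \<longrightarrow> v (\<lambda>y. f y + g y) = v f + v g) \<and>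
     (\<forall>c f. in_K N f \<longrightarrow> v (\<lambda>y. c * f y) = c * v f) \<and>
     (\<exists>F C. finite F \<and> C \<ge> 0 \<and>
        (\<forall>f. in_K N f \<longrightarrow> norm (v f) \<le> C * (\<Sum>(w,m)\<in>F. seminorm_K N w m f)))"

definition vjoin :: "real^'a::finite \<Rightarrow> real^'b::finite \<Rightarrow> real^('a + 'b)" where
  "vjoin x y = (\<chi> i. case i of Inl a \<Rightarrow> x $ a | Inr b \<Rightarrow> y $ b)"

definition vfst :: "real^('a::finite + 'b::finite) \<Rightarrow> real^'a" where
  "vfst z = (\<chi> a. z $ Inl a)"

definition vsnd :: "real^('a::finite + 'b::finite) \<Rightarrow> real^'b" where
  "vsnd z = (\<chi> b. z $ Inr b)"

definition tensor_family :: "('g \<Rightarrow> real^'a::finite \<Rightarrow> real) \<Rightarrow> ('w \<Rightarrow> real^'b::finite \<Rightarrow> real)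
    \<Rightarrow> ('g \<times> 'w) \<Rightarrow> real^('a + 'b) \<Rightarrow> real" where
  "tensor_family M N = (\<lambda>(g,w) z. M g (vfst z) * N w (vsnd z))"

definition mi_lift_left :: "('a::finite \<Rightarrow> nat) \<Rightarrow> ('a + 'b::finite) \<Rightarrow> nat" where
  "mi_lift_left mu = (\<lambda>i. case i of Inl a \<Rightarrow> mu a | Inr b \<Rightarrow> 0)"

end

theory Submission imports Defs "HOL-Library.Multiset" begin

lemma diter_append: "diter (ds @ es) f = diter ds (diter es f)"
  by (induction ds) auto

lemma smooth_diter: "smooth_fun f \<Longrightarrow> smooth_fun (diter es f)"
  unfolding smooth_fun_def by (simp flip: diter_append)

lemma smooth_cont: "smooth_fun f \<Longrightarrow> continuous_on UNIV (diter ds f)"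
  unfolding smooth_fun_def by blast

lemma smooth_vd0:
  assumes "smooth_fun f"
  shows "((\<lambda>t. f (p + t *\<^sub>R axis k 1)) has_vector_derivative dpart k f p) (at 0)"
proof -
  have "(\<lambda>t::real. diter [] f (p + t *\<^sub>R axis k (1::real))) differentiable (at 0)"
    using assms unfolding smooth_fun_def by blast
  then show ?thesis unfolding dpart_def
    by (simp add: vector_derivative_works)
qed

lemma smooth_vd:
  assumes "smooth_fun f"
  shows "((\<lambda>t. f (p + t *\<^sub>R axis k 1)) has_vector_derivative dpart k f (p + t0 *\<^sub>R axis k 1)) (at t0)"
proof -
  have d: "((\<lambda>t. f ((p + t0 *\<^sub>R axis k 1) + t *\<^sub>R axis k 1)) has_vector_derivative dpart k f (p + t0 *\<^sub>R axis k 1)) (at ((\<lambda>t. t - t0) t0))"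
    using smooth_vd0[OF assms] by simp
  have s: "((\<lambda>t::real. t - t0) has_vector_derivative 1) (at t0)"
    by (auto intro!: derivative_eq_intros)
  have "((\<lambda>t. f ((p + t0 *\<^sub>R axis k 1) + t *\<^sub>R axis k 1)) \<circ> (\<lambda>t. t - t0) has_vector_derivative 1 *\<^sub>R dpart k f (p + t0 *\<^sub>R axis k 1)) (at t0)"
    by (rule vector_diff_chain_at[OF s d])
  moreover have "((\<lambda>t. f ((p + t0 *\<^sub>R axis k 1) + t *\<^sub>R axis k 1)) \<circ> (\<lambda>t. t - t0)) = (\<lambda>t. f (p + t *\<^sub>R axis k 1))"
    by (auto simp: o_def algebra_simps)
  ultimately show ?thesis by simp
qed


lemma norm_two_axes: "norm (s *\<^sub>R axis i (1::real) + t *\<^sub>R axis j 1 :: real^'n) \<le> \<bar>s\<bar> + \<bar>t\<bar>"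
  by (rule order_trans[OF norm_triangle_ineq]) simp

lemma seg_step:
  fixes f :: "real^'n \<Rightarrow> 'b::real_normed_vector"
  assumes sm: "smooth_fun f" and tau: "0 < \<tau>"
    and bd: "\<And>x. x \<in> {0..\<tau>} \<Longrightarrow> norm (dpart k f (q + x *\<^sub>R axis k 1) - A) \<le> e"
  shows "norm (f (q + \<tau> *\<^sub>R axis k 1) - f q - \<tau> *\<^sub>R A) \<le> \<tau> * (3 * e)"
proof -
  have e0: "0 \<le> e" using bd[of 0] tau by (auto intro: order_trans[OF norm_ge_zero])
  have "norm ((\<lambda>t. f (q + t *\<^sub>R axis k 1)) \<tau> - (\<lambda>t. f (q + t *\<^sub>R axis k 1)) 0 - (\<tau> - 0) *\<^sub>R dpart k f (q + 0 *\<^sub>R axis k 1)) \<le> norm (\<tau> - 0) * (2*e)"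
  proof (rule vector_differentiable_bound_linearization[where S="{0..\<tau>}" and f'="\<lambda>x. dpart k f (q + x *\<^sub>R axis k 1)"])
    fix x assume "x \<in> {0..\<tau>}"
    show "((\<lambda>t. f (q + t *\<^sub>R axis k 1)) has_vector_derivative dpart k f (q + x *\<^sub>R axis k 1)) (at x within {0..\<tau>})"
      using smooth_vd[OF sm] has_vector_derivative_at_within by blast
    have "norm (dpart k f (q + x *\<^sub>R axis k 1) - dpart k f (q + 0 *\<^sub>R axis k 1))
        \<le> norm (dpart k f (q + x *\<^sub>R axis k 1) - A) + norm (dpart k f (q + 0 *\<^sub>R axis k 1) - A)"
      by (rule norm_diff_triangle_le[where y=A]) (auto simp: norm_minus_commute)
    also have "\<dots> \<le> 2 * e" using bd[OF \<open>x \<in> _\<close>] bd[of 0] tau by simp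
    finally show "norm (dpart k f (q + x *\<^sub>R axis k 1) - dpart k f (q + 0 *\<^sub>R axis k 1)) \<le> 2 * e" .
  next
    show "closed_segment 0 \<tau> \<subseteq> {0..\<tau>}" using tau by (simp add: closed_segment_eq_real_ivl)
  next
    show "0 \<in> {0..\<tau>}" using tau by simp
  qed
  then have h1: "norm (f (q + \<tau> *\<^sub>R axis k 1) - f q - \<tau> *\<^sub>R dpart k f q) \<le> \<tau> * (2*e)"
    using tau by simp
  have h2: "norm (\<tau> *\<^sub>R dpart k f q - \<tau> *\<^sub>R A) \<le> \<tau> * e"
    using bd[of 0] tau by (simp flip: scaleR_diff_right)
  have "norm (f (q + \<tau> *\<^sub>R axis k 1) - f q - \<tau> *\<^sub>R A) \<le> norm (f (q + \<tau> *\<^sub>R axis k 1) - f q - \<tau> *\<^sub>R dpart k f q) + norm (\<tau> *\<^sub>R dpart k f q - \<tau> *\<^sub>R A)"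
    by (rule order_trans[OF _ norm_triangle_ineq]) (simp add: algebra_simps)
  then show ?thesis using h1 h2 by simp
qed

lemma rect_bound:
  fixes f :: "real^'n \<Rightarrow> 'b::real_normed_vector"
  assumes sm: "smooth_fun f"
    and A: "\<And>p. dist p z < \<delta> \<Longrightarrow> norm (dpart j (dpart i f) p - A) \<le> e"
    and tau: "0 < \<tau>" "2 * \<tau> < \<delta>"
  shows "norm (f (z + \<tau> *\<^sub>R axis i 1 + \<tau> *\<^sub>R axis j 1) - f (z + \<tau> *\<^sub>R axis i 1) - f (z + \<tau> *\<^sub>R axis j 1) + f z - (\<tau> * \<tau>) *\<^sub>R A) \<le> \<tau> * (3 * (\<tau> * (3 * e)))"
proof -
  have smi: "smooth_fun (dpart i f)" using smooth_diter[OF sm, of "[i]"] by simp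
  have inner: "norm (dpart i f (z + s *\<^sub>R axis i 1 + \<tau> *\<^sub>R axis j 1) - dpart i f (z + s *\<^sub>R axis i 1) - \<tau> *\<^sub>R A) \<le> \<tau> * (3 * e)"
    if s: "s \<in> {0..\<tau>}" for s
  proof (rule seg_step[OF smi tau(1)])
    fix x assume x: "x \<in> {0..\<tau>}"
    have "dist (z + s *\<^sub>R axis i 1 + x *\<^sub>R axis j 1) z = norm (s *\<^sub>R axis i (1::real) + x *\<^sub>R axis j 1 :: real^'n)"
      by (simp add: dist_norm)
    also have "\<dots> \<le> \<bar>s\<bar> + \<bar>x\<bar>" by (rule norm_two_axes)
    also have "\<dots> < \<delta>" using s x tau by auto
    finally show "norm (dpart j (dpart i f) (z + s *\<^sub>R axis i 1 + x *\<^sub>R axis j 1) - A) \<le> e" by (rule A)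
  qed
  show ?thesis
  proof -
    have eq: "\<And>s. z + \<tau> *\<^sub>R axis j 1 + s *\<^sub>R axis i 1 = z + s *\<^sub>R axis i 1 + \<tau> *\<^sub>R axis j (1::real)"
      by (simp add: algebra_simps)
    have "norm ((\<lambda>s. f (z + s *\<^sub>R axis i 1 + \<tau> *\<^sub>R axis j 1) - f (z + s *\<^sub>R axis i 1)) \<tau> - (\<lambda>s. f (z + s *\<^sub>R axis i 1 + \<tau> *\<^sub>R axis j 1) - f (z + s *\<^sub>R axis i 1)) 0 - (\<tau> - 0) *\<^sub>R (dpart i f (z + 0 *\<^sub>R axis i 1 + \<tau> *\<^sub>R axis j 1) - dpart i f (z + 0 *\<^sub>R axis i 1)))
       \<le> norm (\<tau> - 0) * (\<tau> * (6 * e))"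
    proof (rule vector_differentiable_bound_linearization[where S="{0..\<tau>}" and f'="\<lambda>x. dpart i f (z + x *\<^sub>R axis i 1 + \<tau> *\<^sub>R axis j 1) - dpart i f (z + x *\<^sub>R axis i 1)"])
      fix x assume x: "x \<in> {0..\<tau>}"
      have d1: "((\<lambda>s. f ((z + \<tau> *\<^sub>R axis j 1) + s *\<^sub>R axis i 1)) has_vector_derivative dpart i f ((z + \<tau> *\<^sub>R axis j 1) + x *\<^sub>R axis i 1)) (at x)"
        by (rule smooth_vd[OF sm])
      have d2: "((\<lambda>s. f (z + s *\<^sub>R axis i 1)) has_vector_derivative dpart i f (z + x *\<^sub>R axis i 1)) (at x)"
        by (rule smooth_vd[OF sm])
      show "((\<lambda>s. f (z + s *\<^sub>R axis i 1 + \<tau> *\<^sub>R axis j 1) - f (z + s *\<^sub>R axis i 1)) has_vector_derivative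
          dpart i f (z + x *\<^sub>R axis i 1 + \<tau> *\<^sub>R axis j 1) - dpart i f (z + x *\<^sub>R axis i 1)) (at x within {0..\<tau>})"
        using has_vector_derivative_diff[OF d1 d2] unfolding eq by (rule has_vector_derivative_at_within)
      have "norm ((dpart i f (z + x *\<^sub>R axis i 1 + \<tau> *\<^sub>R axis j 1) - dpart i f (z + x *\<^sub>R axis i 1)) -
               (dpart i f (z + 0 *\<^sub>R axis i 1 + \<tau> *\<^sub>R axis j 1) - dpart i f (z + 0 *\<^sub>R axis i 1)))
          \<le> norm (dpart i f (z + x *\<^sub>R axis i 1 + \<tau> *\<^sub>R axis j 1) - dpart i f (z + x *\<^sub>R axis i 1) - \<tau> *\<^sub>R A)
           + norm (dpart i f (z + 0 *\<^sub>R axis i 1 + \<tau> *\<^sub>R axis j 1) - dpart i f (z + 0 *\<^sub>R axis i 1) - \<tau> *\<^sub>R A)"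
        by (rule norm_diff_triangle_le[where y="\<tau> *\<^sub>R A"]) (auto simp: norm_minus_commute)
      also have "\<dots> \<le> \<tau> * (3 * e) + \<tau> * (3 * e)"
        using inner[OF x] inner[of 0] tau by (intro add_mono) auto
      finally show "norm ((dpart i f (z + x *\<^sub>R axis i 1 + \<tau> *\<^sub>R axis j 1) - dpart i f (z + x *\<^sub>R axis i 1)) -
               (dpart i f (z + 0 *\<^sub>R axis i 1 + \<tau> *\<^sub>R axis j 1) - dpart i f (z + 0 *\<^sub>R axis i 1))) \<le> \<tau> * (6 * e)"
        by simp
    next
      show "closed_segment 0 \<tau> \<subseteq> {0..\<tau>}" using tau by (simp add: closed_segment_eq_real_ivl)
    next
      show "0 \<in> {0..\<tau>}" using tau by simp
    qed
    then have h1: "norm (f (z + \<tau> *\<^sub>R axis i 1 + \<tau> *\<^sub>R axis j 1) - f (z + \<tau> *\<^sub>R axis i 1) - (f (z + \<tau> *\<^sub>R axis j 1) - f z)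
        - \<tau> *\<^sub>R (dpart i f (z + \<tau> *\<^sub>R axis j 1) - dpart i f z)) \<le> \<tau> * (\<tau> * (6 * e))"
      using tau by simp
    have h2: "norm (\<tau> *\<^sub>R (dpart i f (z + \<tau> *\<^sub>R axis j 1) - dpart i f z) - (\<tau> * \<tau>) *\<^sub>R A) \<le> \<tau> * (\<tau> * (3 * e))"
    proof -
      have "\<tau> *\<^sub>R (dpart i f (z + \<tau> *\<^sub>R axis j 1) - dpart i f z) - (\<tau> * \<tau>) *\<^sub>R A
          = \<tau> *\<^sub>R (dpart i f (z + 0 *\<^sub>R axis i 1 + \<tau> *\<^sub>R axis j 1) - dpart i f (z + 0 *\<^sub>R axis i 1) - \<tau> *\<^sub>R A)"
        by (simp add: algebra_simps)
      then show ?thesis using inner[of 0] tau by (simp add: mult_left_mono)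
    qed
    have "norm (f (z + \<tau> *\<^sub>R axis i 1 + \<tau> *\<^sub>R axis j 1) - f (z + \<tau> *\<^sub>R axis i 1) - f (z + \<tau> *\<^sub>R axis j 1) + f z - (\<tau> * \<tau>) *\<^sub>R A)
       \<le> norm (f (z + \<tau> *\<^sub>R axis i 1 + \<tau> *\<^sub>R axis j 1) - f (z + \<tau> *\<^sub>R axis i 1) - (f (z + \<tau> *\<^sub>R axis j 1) - f z)
        - \<tau> *\<^sub>R (dpart i f (z + \<tau> *\<^sub>R axis j 1) - dpart i f z)) + norm (\<tau> *\<^sub>R (dpart i f (z + \<tau> *\<^sub>R axis j 1) - dpart i f z) - (\<tau> * \<tau>) *\<^sub>R A)"
      by (rule order_trans[OF _ norm_triangle_ineq]) (simp add: algebra_simps)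
    also have "\<dots> \<le> \<tau> * (\<tau> * (6 * e)) + \<tau> * (\<tau> * (3 * e))" using h1 h2 by simp
    finally show ?thesis by (simp add: algebra_simps)
  qed
qed


lemma cont_ball:
  assumes "continuous_on UNIV F" "0 < e"
  shows "\<exists>d>0. \<forall>p. dist p z < d \<longrightarrow> norm (F p - F z) \<le> e"
  using assms unfolding continuous_on_iff dist_norm
  by (meson UNIV_I less_imp_le)

lemma schwarz:
  fixes f :: "real^'n \<Rightarrow> 'b::real_normed_vector"
  assumes sm: "smooth_fun f"
  shows "dpart i (dpart j f) = dpart j (dpart i f)"
proof
  fix z
  define A where "A = dpart j (dpart i f) z"
  define B where "B = dpart i (dpart j f) z"
  have "norm (B - A) \<le> 18 * e" if e: "e > 0" for e
  proof -
    obtain d1 where d1: "d1 > 0" "\<And>p. dist p z < d1 \<Longrightarrow> norm (dpart j (dpart i f) p - A) \<le> e"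
      using cont_ball[OF smooth_cont[OF sm, of "[j,i]"] e, of z] unfolding A_def by auto
    obtain d2 where d2: "d2 > 0" "\<And>p. dist p z < d2 \<Longrightarrow> norm (dpart i (dpart j f) p - B) \<le> e"
      using cont_ball[OF smooth_cont[OF sm, of "[i,j]"] e, of z] unfolding B_def by auto
    define \<tau> where "\<tau> = min d1 d2 / 3"
    have tau: "0 < \<tau>" "2 * \<tau> < d1" "2 * \<tau> < d2" using d1 d2 by (auto simp: \<tau>_def)
    have r1: "norm (f (z + \<tau> *\<^sub>R axis i 1 + \<tau> *\<^sub>R axis j 1) - f (z + \<tau> *\<^sub>R axis i 1) - f (z + \<tau> *\<^sub>R axis j 1) + f z - (\<tau> * \<tau>) *\<^sub>R A) \<le> \<tau> * (3 * (\<tau> * (3 * e)))"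
      by (rule rect_bound[OF sm d1(2) tau(1) tau(2)])
    have r2: "norm (f (z + \<tau> *\<^sub>R axis j 1 + \<tau> *\<^sub>R axis i 1) - f (z + \<tau> *\<^sub>R axis j 1) - f (z + \<tau> *\<^sub>R axis i 1) + f z - (\<tau> * \<tau>) *\<^sub>R B) \<le> \<tau> * (3 * (\<tau> * (3 * e)))"
      by (rule rect_bound[OF sm d2(2) tau(1) tau(3)])
    have eq: "z + \<tau> *\<^sub>R axis j 1 + \<tau> *\<^sub>R axis i 1 = z + \<tau> *\<^sub>R axis i 1 + \<tau> *\<^sub>R axis j (1::real)"
      by (simp add: algebra_simps)
    define D where "D = f (z + \<tau> *\<^sub>R axis i 1 + \<tau> *\<^sub>R axis j 1) - f (z + \<tau> *\<^sub>R axis i 1) - f (z + \<tau> *\<^sub>R axis j 1) + f z"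
    have c: "\<tau> * (3 * (\<tau> * (3 * e))) = \<tau> * \<tau> * (9 * e)" by (simp add: algebra_simps)
    have r1': "norm (D - (\<tau> * \<tau>) *\<^sub>R A) \<le> \<tau> * \<tau> * (9 * e)" using r1 unfolding D_def c .
    have r2'': "norm (f (z + \<tau> *\<^sub>R axis i 1 + \<tau> *\<^sub>R axis j 1) - f (z + \<tau> *\<^sub>R axis j 1) - f (z + \<tau> *\<^sub>R axis i 1) + f z - (\<tau> * \<tau>) *\<^sub>R B) \<le> \<tau> * \<tau> * (9 * e)"
      using r2 unfolding eq c .
    have "f (z + \<tau> *\<^sub>R axis i 1 + \<tau> *\<^sub>R axis j 1) - f (z + \<tau> *\<^sub>R axis j 1) - f (z + \<tau> *\<^sub>R axis i 1) + f z - (\<tau> * \<tau>) *\<^sub>R B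
       = D - (\<tau> * \<tau>) *\<^sub>R B" unfolding D_def by (simp add: diff_diff_eq)
    with r2'' have r2': "norm (D - (\<tau> * \<tau>) *\<^sub>R B) \<le> \<tau> * \<tau> * (9 * e)" by simp
    have e1: "(D - (\<tau> * \<tau>) *\<^sub>R A) - (D - (\<tau> * \<tau>) *\<^sub>R B) = (\<tau> * \<tau>) *\<^sub>R (B - A)"
      by (simp add: scaleR_diff_right)
    have "(\<tau> * \<tau>) * norm (B - A) = norm ((D - (\<tau> * \<tau>) *\<^sub>R A) - (D - (\<tau> * \<tau>) *\<^sub>R B))"
      unfolding e1 using tau by simp
    also have "\<dots> \<le> norm (D - (\<tau> * \<tau>) *\<^sub>R A) + norm (D - (\<tau> * \<tau>) *\<^sub>R B)" by (rule norm_triangle_ineq4)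
    also have "\<dots> \<le> (\<tau> * \<tau>) * (18 * e)" using r1' r2' by simp
    finally show ?thesis using tau by (simp add: mult_le_cancel_left_pos)
  qed
  note H = this
  have "norm (B - A) \<le> 0"
  proof (rule field_le_epsilon)
    fix e :: real assume "0 < e"
    then have "norm (B - A) \<le> 18 * (e / 18)" using H[of "e/18"] by simp
    then show "norm (B - A) \<le> 0 + e" by simp
  qed
  then show "dpart i (dpart j f) z = dpart j (dpart i f) z" unfolding A_def B_def by simp
qed


lemma move_front:
  fixes F :: "real^'n \<Rightarrow> 'b::real_normed_vector"
  assumes "smooth_fun F"
  shows "diter (es @ [a]) F = diter (a # es) F"
proof (induction es)
  case Nil then show ?case by simp
next
  case (Cons b es)
  have "diter ((b # es) @ [a]) F = dpart b (dpart a (diter es F))"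
    using Cons by simp
  also have "\<dots> = dpart a (dpart b (diter es F))"
    by (rule schwarz[OF smooth_diter[OF assms]])
  finally show ?case by simp
qed

lemma diter_perm:
  fixes f :: "real^'n \<Rightarrow> 'b::real_normed_vector"
  assumes "smooth_fun f"
  shows "mset ds = mset es \<Longrightarrow> diter ds f = diter es f"
proof (induction ds arbitrary: es)
  case Nil then show ?case by simp
next
  case (Cons a ds)
  then have "a \<in> set es" by (metis list.set_intros(1) set_mset_mset)
  then obtain es1 es2 where es: "es = es1 @ a # es2" by (meson split_list)
  have "diter es f = diter (es1 @ [a]) (diter es2 f)"
    unfolding es by (simp flip: diter_append)
  also have "\<dots> = dpart a (diter (es1 @ es2) f)"
    using move_front[OF smooth_diter[OF assms, of es2], of es1 a] by (simp add: diter_append)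
  also have "diter (es1 @ es2) f = diter ds f"
    using Cons es by (metis add_mset_add_mset_same_iff mset.simps(2) mset_append add_mset_add_single union_mset_add_mset_right)
  finally show ?case by simp
qed

lemma list_exists: "\<exists>ds. \<forall>i. count_list ds i = (mu :: 'n::finite \<Rightarrow> nat) i"
proof -
  obtain xs where "mset xs = Abs_multiset mu" using ex_mset by blast
  then have "count (mset xs) = mu" by (simp add: count_Abs_multiset)
  then show ?thesis by (metis count_mset)
qed

lemma len_mi: "(\<forall>i. count_list D i = mu i) \<Longrightarrow> length D = mi_abs (mu :: 'n::finite \<Rightarrow> nat)"
  unfolding mi_abs_def using sum_count_set[of D UNIV] by (metis subset_UNIV finite sum.cong)

lemma dmulti_some: "\<forall>i. count_list (SOME ds. \<forall>i. count_list ds i = mu i) i = (mu :: 'n::finite \<Rightarrow> nat) i"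
  by (rule someI_ex[OF list_exists])

lemma dmulti_eq:
  fixes f :: "real^'n::finite \<Rightarrow> 'b::real_normed_vector"
  assumes "smooth_fun f" "\<forall>i. count_list D i = mu i"
  shows "dmulti mu f = diter D f"
  unfolding dmulti_def
proof (rule diter_perm[OF assms(1)])
  show "mset (SOME ds. \<forall>i. count_list ds i = mu i) = mset D"
    using dmulti_some[of mu] assms(2) by (simp add: multiset_eq_iff count_mset)
qed


lemma K_bound:
  assumes "in_K F G"
  shows "\<exists>B. \<forall>D z. length D \<le> m \<longrightarrow> F g z * norm (diter D G z) \<le> B"
proof -
  from assms have sm: "smooth_fun G" and bd: "bdd_above {F g x * norm (dmulti mu G x) | x mu. mi_abs mu \<le> m}"
    unfolding in_K_def by auto
  then obtain B where B: "\<And>y. y \<in> {F g x * norm (dmulti mu G x) | x mu. mi_abs mu \<le> m} \<Longrightarrow> y \<le> B"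
    unfolding bdd_above_def by auto
  have "F g z * norm (diter D G z) \<le> B" if "length D \<le> m" for D z
  proof -
    define mu where "mu = (\<lambda>i. count_list D i)"
    have "dmulti mu G = diter D G" by (rule dmulti_eq[OF sm]) (simp add: mu_def)
    moreover have "mi_abs mu \<le> m" using len_mi[of D mu] that by (simp add: mu_def)
    ultimately show ?thesis by (intro B) force
  qed
  then show ?thesis by blast
qed

lemma K_intro:
  assumes sm: "smooth_fun G"
    and bd: "\<And>g m. \<exists>B. \<forall>D z. length D \<le> m \<longrightarrow> F g z * norm (diter D G z) \<le> B"
  shows "in_K F G"
  unfolding in_K_def
proof (intro conjI allI sm)
  fix g m
  obtain B where B: "\<And>D z. length D \<le> m \<Longrightarrow> F g z * norm (diter D G z) \<le> B" using bd by blast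
  show "bdd_above {F g x * norm (dmulti mu G x) | x mu. mi_abs mu \<le> m}"
  proof (rule bdd_aboveI)
    fix y assume "y \<in> {F g x * norm (dmulti mu G x) | x mu. mi_abs mu \<le> m}"
    then obtain x mu where y: "y = F g x * norm (dmulti mu G x)" "mi_abs mu \<le> m" by auto
    have "length (SOME ds. \<forall>i. count_list ds i = mu i) = mi_abs mu" by (rule len_mi[OF dmulti_some])
    then show "y \<le> B" using y B unfolding dmulti_def by simp
  qed
qed

lemma vjoin_Inr: "vjoin x (y + t *\<^sub>R axis i 1) = vjoin x y + t *\<^sub>R axis (Inr i) (1::real)"
  by (simp add: vec_eq_iff vjoin_def axis_def split: sum.split)

lemma vjoin_Inl: "vjoin (x + t *\<^sub>R axis i 1) y = vjoin x y + t *\<^sub>R axis (Inl i) (1::real)"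
  by (simp add: vec_eq_iff vjoin_def axis_def split: sum.split)

lemma vjoin_split: "vjoin x y = vjoin x 0 + vjoin 0 y"
  by (simp add: vec_eq_iff vjoin_def split: sum.split)

lemma vjoin_diff: "vjoin x' y - vjoin x y = vjoin (x' - x) 0"
  by (simp add: vec_eq_iff vjoin_def split: sum.split)

lemma linear_vjoin_l: "linear (\<lambda>x. vjoin x (0::real^'b::finite))"
  by (rule linearI) (simp_all add: vec_eq_iff vjoin_def split: sum.split)

lemma linear_vjoin_r: "linear (\<lambda>y. vjoin (0::real^'a::finite) y)"
  by (rule linearI) (simp_all add: vec_eq_iff vjoin_def split: sum.split)

lemma bl_vjoin_l: "bounded_linear (\<lambda>x. vjoin x (0::real^'b::finite))"
  using linear_vjoin_l linear_conv_bounded_linear by blast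

lemma bl_vjoin_r: "bounded_linear (\<lambda>y. vjoin (0::real^'a::finite) y)"
  using linear_vjoin_r linear_conv_bounded_linear by blast

lemma cont_vjoin_pair: "continuous_on S (\<lambda>p. vjoin (fst p) (snd p))"
proof -
  have "continuous_on S (\<lambda>p. vjoin (fst p) 0 + vjoin 0 (snd p))"
    by (intro continuous_intros linear_continuous_on_compose[OF _ linear_vjoin_l] linear_continuous_on_compose[OF _ linear_vjoin_r])
  then show ?thesis by (subst vjoin_split) simp
qed

lemma cont_vjoin_x: "continuous_on S (\<lambda>y. vjoin x y)"
proof -
  have "continuous_on S (\<lambda>y. vjoin x 0 + vjoin 0 y)"
    by (intro continuous_intros linear_continuous_on_compose[OF _ linear_vjoin_r])
  then show ?thesis by (subst vjoin_split) simp
qed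

lemma cont_vjoin_y: "continuous_on S (\<lambda>x. vjoin x y)"
proof -
  have "continuous_on S (\<lambda>x. vjoin x 0 + vjoin 0 y)"
    by (intro continuous_intros linear_continuous_on_compose[OF _ linear_vjoin_l])
  then show ?thesis by (subst vjoin_split) simp
qed

lemma dpart_restr: "dpart i (\<lambda>y. H (vjoin x y)) = (\<lambda>y. dpart (Inr i) H (vjoin x y))"
  unfolding dpart_def vjoin_Inr by simp

lemma restr_diter: "diter ds (\<lambda>y. G (vjoin x y)) = (\<lambda>y. diter (map Inr ds) G (vjoin x y))"
  by (induction ds) (simp_all add: dpart_restr)

lemma restr_smooth:
  assumes "smooth_fun G"
  shows "smooth_fun (\<lambda>y. G (vjoin x y))"
  unfolding smooth_fun_def restr_diter
proof (intro allI conjI)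
  fix ds
  show "continuous_on UNIV (\<lambda>y. diter (map Inr ds) G (vjoin x y))"
    by (rule continuous_on_compose2[OF smooth_cont[OF assms] cont_vjoin_x]) auto
  fix i y
  have "(\<lambda>t. diter (map Inr ds) G (vjoin x y + t *\<^sub>R axis (Inr i) 1)) differentiable (at 0)"
    using assms unfolding smooth_fun_def by blast
  then show "(\<lambda>t. diter (map Inr ds) G (vjoin x (y + t *\<^sub>R axis i 1))) differentiable (at 0)"
    unfolding vjoin_Inr .
qed


lemma tensor_vjoin: "tensor_family M N (g, w) (vjoin x y) = M g x * N w y"
  by (simp add: tensor_family_def vfst_def vsnd_def vjoin_def)

lemma dpart_lin:
  fixes f g :: "real^'n::finite \<Rightarrow> complex"
  assumes "smooth_fun f" "smooth_fun g"
  shows "dpart i (\<lambda>y. f y + c * g y) = (\<lambda>y. dpart i f y + c * dpart i g y)"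
proof
  fix z
  have "((\<lambda>t. f (z + t *\<^sub>R axis i 1) + c * g (z + t *\<^sub>R axis i 1)) has_vector_derivative dpart i f z + c * dpart i g z) (at 0)"
    by (intro derivative_intros smooth_vd0 assms)
  then show "dpart i (\<lambda>y. f y + c * g y) z = dpart i f z + c * dpart i g z"
    unfolding dpart_def[of i "\<lambda>y. f y + c * g y"] by (rule vector_derivative_at)
qed

lemma lin_diter:
  fixes f g :: "real^'n::finite \<Rightarrow> complex"
  assumes "smooth_fun f" "smooth_fun g"
  shows "diter ds (\<lambda>y. f y + c * g y) = (\<lambda>y. diter ds f y + c * diter ds g y)"
proof (induction ds)
  case Nil then show ?case by simp
next
  case (Cons i ds)
  then show ?case using dpart_lin[OF smooth_diter[OF assms(1)] smooth_diter[OF assms(2)]] by simp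
qed

lemma lin_smooth:
  fixes f g :: "real^'n::finite \<Rightarrow> complex"
  assumes "smooth_fun f" "smooth_fun g"
  shows "smooth_fun (\<lambda>y. f y + c * g y)"
  unfolding smooth_fun_def lin_diter[OF assms]
proof (intro allI conjI)
  fix ds
  show "continuous_on UNIV (\<lambda>y. diter ds f y + c * diter ds g y)"
    by (intro continuous_intros smooth_cont assms)
  fix i x
  have "((\<lambda>t. diter ds f (x + t *\<^sub>R axis i 1) + c * diter ds g (x + t *\<^sub>R axis i 1)) has_vector_derivative
      dpart i (diter ds f) x + c * dpart i (diter ds g) x) (at 0)"
    by (intro derivative_intros smooth_vd0 smooth_diter assms)
  then show "(\<lambda>t. diter ds f (x + t *\<^sub>R axis i 1) + c * diter ds g (x + t *\<^sub>R axis i 1)) differentiable (at 0)"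
    using differentiableI_vector by blast
qed

lemma K_lin:
  fixes f g :: "real^'n::finite \<Rightarrow> complex"
  assumes N0: "\<forall>w y. 0 \<le> N w y" and f: "in_K N f" and g: "in_K N g"
  shows "in_K N (\<lambda>y. f y + c * g y)"
proof (rule K_intro)
  have sf: "smooth_fun f" and sg: "smooth_fun g" using f g unfolding in_K_def by auto
  show "smooth_fun (\<lambda>y. f y + c * g y)" by (rule lin_smooth[OF sf sg])
  fix w m
  obtain B1 where B1: "\<And>D z. length D \<le> m \<Longrightarrow> N w z * norm (diter D f z) \<le> B1" using K_bound[OF f] by blast
  obtain B2 where B2: "\<And>D z. length D \<le> m \<Longrightarrow> N w z * norm (diter D g z) \<le> B2" using K_bound[OF g] by blast
  have "N w z * norm (diter D (\<lambda>y. f y + c * g y) z) \<le> B1 + norm c * B2" if "length D \<le> m" for D z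
  proof -
    have "N w z * norm (diter D (\<lambda>y. f y + c * g y) z) = N w z * norm (diter D f z + c * diter D g z)"
      by (simp add: lin_diter[OF sf sg])
    also have "\<dots> \<le> N w z * (norm (diter D f z) + norm c * norm (diter D g z))"
      using N0 by (intro mult_left_mono) (auto intro: order_trans[OF norm_triangle_ineq] simp: norm_mult)
    also have "\<dots> = N w z * norm (diter D f z) + norm c * (N w z * norm (diter D g z))"
      by (simp add: algebra_simps)
    also have "\<dots> \<le> B1 + norm c * B2"
      using B1[OF that] B2[OF that] by (intro add_mono mult_left_mono) auto
    finally show ?thesis .
  qed
  then show "\<exists>B. \<forall>D z. length D \<le> m \<longrightarrow> N w z * norm (diter D (\<lambda>y. f y + c * g y) z) \<le> B" by blast
qed

lemma diter_zero: "diter ds (\<lambda>y. 0::complex) = (\<lambda>y. 0)"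
  by (induction ds) (simp_all add: dpart_def)

lemma K_zero: "in_K N (\<lambda>y. 0::complex)"
  by (rule K_intro) (auto simp: smooth_fun_def diter_zero)

lemma K_scale:
  fixes g :: "real^'n::finite \<Rightarrow> complex"
  assumes N0: "\<forall>w y. 0 \<le> N w y" and g: "in_K N g"
  shows "in_K N (\<lambda>y. c * g y)"
  using K_lin[OF N0 K_zero g, of c] by simp

lemma v_lin:
  fixes f g :: "real^'n::finite \<Rightarrow> complex"
  assumes N0: "\<forall>w y. 0 \<le> N w y" and v: "in_K_dual N v" and f: "in_K N f" and g: "in_K N g"
  shows "v (\<lambda>y. f y + c * g y) = v f + c * v g"
proof -
  have "v (\<lambda>y. f y + (\<lambda>y. c * g y) y) = v f + v (\<lambda>y. c * g y)"
    using v f K_scale[OF N0 g] unfolding in_K_dual_def by blast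
  also have "v (\<lambda>y. c * g y) = c * v g" using v g unfolding in_K_dual_def by blast
  finally show ?thesis by simp
qed

lemma seminorm_le:
  assumes "\<And>y ds. length ds \<le> m \<Longrightarrow> N w y * norm (diter ds f y) \<le> e"
  shows "seminorm_K N w m f \<le> e"
  unfolding seminorm_K_def
proof (rule cSup_least)
  show "{N w x * norm (dmulti mu f x) |x mu. mi_abs mu \<le> m} \<noteq> {}"
  proof -
    have "N w 0 * norm (dmulti (\<lambda>_. 0) f 0) \<in> {N w x * norm (dmulti mu f x) |x mu. mi_abs mu \<le> m}"
      by (rule CollectI, rule exI[of _ 0], rule exI[of _ "\<lambda>_. 0"]) (simp add: mi_abs_def)
    then show ?thesis by blast
  qed
  fix y assume "y \<in> {N w x * norm (dmulti mu f x) |x mu. mi_abs mu \<le> m}"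
  then obtain x mu where y: "y = N w x * norm (dmulti mu f x)" "mi_abs mu \<le> m" by auto
  have "length (SOME ds. \<forall>i. count_list ds i = mu i) = mi_abs mu" by (rule len_mi[OF dmulti_some])
  then show "y \<le> e" using y assms unfolding dmulti_def by simp
qed

lemma v_bound:
  assumes "in_K_dual N v"
  obtains F C where "finite F" "C \<ge> 0" "\<And>f. in_K N f \<Longrightarrow> norm (v f) \<le> C * (\<Sum>(w,m)\<in>F. seminorm_K N w m f)"
  using assms unfolding in_K_dual_def by blast

lemma v_small:
  assumes v: "in_K_dual N v"
  shows "\<exists>F. finite F \<and> (\<forall>e>0. \<exists>e'>0. \<forall>f. in_K N f \<longrightarrow>
           (\<forall>(w,m)\<in>F. \<forall>y ds. length ds \<le> m \<longrightarrow> N w y * norm (diter ds f y) \<le> e') \<longrightarrow> norm (v f) \<le> e)"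
proof -
  obtain F C where F: "finite F" "C \<ge> 0" "\<And>f. in_K N f \<Longrightarrow> norm (v f) \<le> C * (\<Sum>(w,m)\<in>F. seminorm_K N w m f)"
    using v_bound[OF v] by blast
  have "\<exists>e'>0. \<forall>f. in_K N f \<longrightarrow>
           (\<forall>(w,m)\<in>F. \<forall>y ds. length ds \<le> m \<longrightarrow> N w y * norm (diter ds f y) \<le> e') \<longrightarrow> norm (v f) \<le> e"
    if e: "e > 0" for e
  proof (intro exI conjI allI impI)
    define e' where "e' = e / ((C + 1) * (real (card F) + 1))"
    show "e' > 0" using e F(2) by (simp add: e'_def)
    fix f assume f: "in_K N f" and sm: "\<forall>(w,m)\<in>F. \<forall>y ds. length ds \<le> m \<longrightarrow> N w y * norm (diter ds f y) \<le> e'"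
    have "(\<Sum>(w,m)\<in>F. seminorm_K N w m f) \<le> (\<Sum>(w,m)\<in>F. e')"
      using sm by (intro sum_mono) (auto intro!: seminorm_le)
    also have "\<dots> = real (card F) * e'" by (simp add: case_prod_beta)
    finally have s: "(\<Sum>(w,m)\<in>F. seminorm_K N w m f) \<le> real (card F) * e'" .
    have "norm (v f) \<le> C * (real (card F) * e')"
      using F(3)[OF f] s F(2) by (meson mult_left_mono order_trans)
    also have "\<dots> \<le> e"
    proof -
      have "C * (real (card F) * e') \<le> (C + 1) * ((real (card F) + 1) * e')"
        using F(2) \<open>e' > 0\<close> by (intro mult_mono) auto
      also have "\<dots> = e" using F(2) by (simp add: e'_def)
      finally show ?thesis .
    qed
    finally show "norm (v f) \<le> e" .
  qed
  then show ?thesis using F(1) by blast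
qed


lemma restr_bound:
  fixes M :: "'g \<Rightarrow> real^'k1::finite \<Rightarrow> real"
    and N :: "'w \<Rightarrow> real^'k2::finite \<Rightarrow> real"
    and G :: "real^('k1 + 'k2) \<Rightarrow> complex"
  assumes "in_K (tensor_family M N) G"
  shows "\<exists>B. \<forall>ds x y. length ds \<le> m \<longrightarrow> M g x * N w y * norm (diter ds (\<lambda>y. G (vjoin x y)) y) \<le> B"
proof -
  obtain B where B: "\<And>D z. length D \<le> m \<Longrightarrow> tensor_family M N (g, w) z * norm (diter D G z) \<le> B"
    using K_bound[OF assms] by blast
  show ?thesis
  proof (rule exI[of _ B], intro allI impI)
    fix ds :: "'k2 list" and x y assume "length ds \<le> m"
    then have "tensor_family M N (g, w) (vjoin x y) * norm (diter (map Inr ds) G (vjoin x y)) \<le> B"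
      by (intro B) simp
    then show "M g x * N w y * norm (diter ds (\<lambda>y. G (vjoin x y)) y) \<le> B"
      by (simp add: restr_diter tensor_vjoin)
  qed
qed

lemma restr_K:
  fixes M :: "'g \<Rightarrow> real^'k1::finite \<Rightarrow> real"
    and N :: "'w \<Rightarrow> real^'k2::finite \<Rightarrow> real"
    and G :: "real^('k1 + 'k2) \<Rightarrow> complex"
  assumes dM: "defining_family M" and N0: "\<forall>w y. 0 \<le> N w y"
    and G: "in_K (tensor_family M N) G"
  shows "in_K N (\<lambda>y. G (vjoin x y))"
proof (rule K_intro)
  show "smooth_fun (\<lambda>y. G (vjoin x y))" using G restr_smooth unfolding in_K_def by blast
  fix w m
  obtain g U C where gUC: "open U" "x \<in> U" "C > 0" "\<forall>x'\<in>U. M g x' \<ge> C"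
    using dM unfolding defining_family_def by meson
  obtain B where B: "\<And>ds x y. length ds \<le> m \<Longrightarrow> M g x * N w y * norm (diter ds (\<lambda>y. G (vjoin x y)) y) \<le> B"
    using restr_bound[OF G] by blast
  have "N w y * norm (diter D (\<lambda>y. G (vjoin x y)) y) \<le> B / C" if "length D \<le> m" for D y
  proof -
    have "C * (N w y * norm (diter D (\<lambda>y. G (vjoin x y)) y)) \<le> M g x * (N w y * norm (diter D (\<lambda>y. G (vjoin x y)) y))"
      using gUC N0 by (intro mult_right_mono) auto
    also have "\<dots> \<le> B" using B[OF that] by (simp add: mult.assoc)
    finally show ?thesis using gUC(3) by (simp add: field_simps mult.commute)
  qed
  then show "\<exists>B. \<forall>D z. length D \<le> m \<longrightarrow> N w z * norm (diter D (\<lambda>y. G (vjoin x y)) z) \<le> B" by blast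
qed

lemma UE:
  fixes M :: "'g \<Rightarrow> real^'k1::finite \<Rightarrow> real"
    and N :: "'w \<Rightarrow> real^'k2::finite \<Rightarrow> real"
    and \<Phi> :: "real^('k1 + 'k2) \<Rightarrow> complex"
  assumes dM: "defining_family M" and dN: "defining_family N"
    and I: "\<forall>w. \<exists>w' L. bounded (range L) \<and> integrable lborel L \<and> (\<forall>y. 0 \<le> L y) \<and>
              (\<forall>y. N w y \<le> L y * N w' y) \<and> (L \<longlongrightarrow> 0) at_infinity"
    and cont: "continuous_on UNIV \<Phi>"
    and bd: "\<And>g w'. \<exists>B. \<forall>x y. M g x * N w' y * norm (\<Phi> (vjoin x y)) \<le> B"
    and e: "e > 0"
  shows "\<exists>\<delta>>0. \<forall>x' y. dist x' x < \<delta> \<longrightarrow> N w y * norm (\<Phi> (vjoin x' y) - \<Phi> (vjoin x y)) \<le> e"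
proof -
  have N0: "\<And>w y. 0 \<le> N w y" and M0: "\<And>g x. 0 \<le> M g x" using dN dM unfolding defining_family_def by auto
  obtain w' L where L: "\<And>y. 0 \<le> L y" "\<And>y. N w y \<le> L y * N w' y" "(L \<longlongrightarrow> 0) at_infinity"
    using I by blast
  obtain g0 U C0 where gUC: "open U" "x \<in> U" "C0 > 0" "\<And>x'. x'\<in>U \<Longrightarrow> M g0 x' \<ge> C0"
    using dM unfolding defining_family_def by meson
  obtain B where B: "\<And>x y. M g0 x * N w' y * norm (\<Phi> (vjoin x y)) \<le> B" using bd by blast
  have B0: "0 \<le> B" using B[of x 0] M0[of g0 x] N0[of w' 0] by (meson mult_nonneg_nonneg norm_ge_zero order_trans)
  have BU: "N w' y * norm (\<Phi> (vjoin x' y)) \<le> B / C0" if "x' \<in> U" for x' y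
  proof -
    have "C0 * (N w' y * norm (\<Phi> (vjoin x' y))) \<le> M g0 x' * (N w' y * norm (\<Phi> (vjoin x' y)))"
      using gUC(4)[OF that] N0 by (intro mult_right_mono) auto
    also have "\<dots> \<le> B" using B by (simp add: mult.assoc)
    finally show ?thesis using gUC(3) by (simp add: field_simps mult.commute)
  qed
  define \<eta> where "\<eta> = e * C0 / (2 * B + 1)"
  have eta: "\<eta> > 0" using e gUC(3) B0 by (simp add: \<eta>_def)
  have "eventually (\<lambda>y. dist (L y) 0 < \<eta>) at_infinity" using tendstoD[OF L(3) eta] .
  then obtain R where R0: "\<forall>y. R \<le> norm y \<longrightarrow> dist (L y) 0 < \<eta>"
    unfolding eventually_at_infinity by blast
  have R: "L y < \<eta>" if "R \<le> norm y" for y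
    using R0 that abs_ge_self[of "L y"] by force
  have "bounded (N w ` cball 0 R)" using dN unfolding defining_family_def by blast
  then obtain KN where KN0: "\<forall>z\<in>N w ` cball 0 R. norm z \<le> KN" unfolding bounded_iff by blast
  have KN: "\<And>y. y \<in> cball 0 R \<Longrightarrow> norm (N w y) \<le> KN" using KN0 by blast
  define K1 where "K1 = \<bar>KN\<bar> + 1"
  have K1: "K1 > 0" "\<And>y. y \<in> cball 0 R \<Longrightarrow> N w y \<le> K1"
  proof -
    show "K1 > 0" by (simp add: K1_def)
    fix y :: "real^'k2" assume "y \<in> cball 0 R"
    then show "N w y \<le> K1" using KN[of y] abs_ge_self[of "N w y"] abs_ge_self[of KN]
      by (simp add: K1_def)
  qed
  obtain \<delta>0 where d0: "\<delta>0 > 0" "ball x \<delta>0 \<subseteq> U" using gUC(1,2) open_contains_ball by blast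
  define S where "S = (\<lambda>p. vjoin (fst p) (snd p)) ` (cball x \<delta>0 \<times> cball (0::real^'k2) R)"
  have "compact S" unfolding S_def
    by (intro compact_continuous_image cont_vjoin_pair compact_Times compact_cball)
  then have "uniformly_continuous_on S \<Phi>"
    by (intro compact_uniformly_continuous continuous_on_subset[OF cont]) auto
  moreover have "e / K1 > 0" using e K1(1) by simp
  ultimately have "\<exists>d>0. \<forall>z\<in>S. \<forall>z'\<in>S. dist z' z < d \<longrightarrow> dist (\<Phi> z') (\<Phi> z) < e / K1"
    unfolding uniformly_continuous_on_def by blast
  then obtain d where d: "d > 0" "\<And>z z'. z \<in> S \<Longrightarrow> z' \<in> S \<Longrightarrow> dist z' z < d \<Longrightarrow> dist (\<Phi> z') (\<Phi> z) < e / K1"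
    by blast
  obtain Kv where Kv: "Kv > 0" "\<And>a::real^'k1. norm (vjoin a (0::real^'k2)) \<le> norm a * Kv"
    using bounded_linear.pos_bounded[OF bl_vjoin_l] by blast
  define \<delta> where "\<delta> = min \<delta>0 (d / Kv)"
  have "\<delta> > 0" using d0 d Kv by (simp add: \<delta>_def)
  moreover have "N w y * norm (\<Phi> (vjoin x' y) - \<Phi> (vjoin x y)) \<le> e" if x': "dist x' x < \<delta>" for x' y
  proof (cases "R \<le> norm y")
    case True
    have x'U: "x' \<in> U" using x' d0 by (auto simp: \<delta>_def dist_commute)
    have "N w y * norm (\<Phi> (vjoin x' y) - \<Phi> (vjoin x y)) \<le> (L y * N w' y) * (norm (\<Phi> (vjoin x' y)) + norm (\<Phi> (vjoin x y)))"
      using L(1,2) N0 by (intro mult_mono norm_triangle_ineq4) auto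
    also have "\<dots> = L y * (N w' y * norm (\<Phi> (vjoin x' y)) + N w' y * norm (\<Phi> (vjoin x y)))"
      by (simp add: algebra_simps)
    also have "\<dots> \<le> \<eta> * (B / C0 + B / C0)"
    proof (rule mult_mono)
      show "L y \<le> \<eta>" using R[OF True] by simp
      show "N w' y * norm (\<Phi> (vjoin x' y)) + N w' y * norm (\<Phi> (vjoin x y)) \<le> B / C0 + B / C0"
        by (rule add_mono[OF BU[OF x'U] BU[OF gUC(2)]])
      show "0 \<le> \<eta>" using eta by simp
      show "0 \<le> N w' y * norm (\<Phi> (vjoin x' y)) + N w' y * norm (\<Phi> (vjoin x y))"
        using N0 by simp
    qed
    also have "\<dots> = e * (2 * B / (2 * B + 1))" using gUC(3) by (simp add: \<eta>_def field_simps)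
    also have "\<dots> \<le> e * 1" using e B0 by (intro mult_left_mono) auto
    finally show ?thesis by simp
  next
    case False
    have x'c: "x' \<in> cball x \<delta>0" using x' by (auto simp: \<delta>_def dist_commute)
    have yc: "y \<in> cball 0 R" using False by auto
    have in1: "vjoin x' y \<in> S" unfolding S_def by (rule image_eqI[of _ _ "(x', y)"]) (use x'c yc in auto)
    have in2: "vjoin x y \<in> S" unfolding S_def by (rule image_eqI[of _ _ "(x, y)"]) (use yc d0 in auto)
    have "dist (vjoin x' y) (vjoin x y) = norm (vjoin (x' - x) (0::real^'k2))" by (simp add: dist_norm vjoin_diff)
    also have "\<dots> \<le> norm (x' - x) * Kv" by (rule Kv(2))
    also have "\<dots> < (d / Kv) * Kv" using x' Kv(1) by (intro mult_strict_right_mono) (auto simp: \<delta>_def dist_norm)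
    also have "\<dots> = d" using Kv(1) by simp
    finally have "dist (\<Phi> (vjoin x' y)) (\<Phi> (vjoin x y)) < e / K1" by (rule d(2)[OF in2 in1])
    then have "norm (\<Phi> (vjoin x' y) - \<Phi> (vjoin x y)) \<le> e / K1" by (simp add: dist_norm)
    then have "N w y * norm (\<Phi> (vjoin x' y) - \<Phi> (vjoin x y)) \<le> K1 * (e / K1)"
      using K1(1) K1(2)[OF yc] N0 by (intro mult_mono) auto
    then show ?thesis using K1(1) by simp
  qed
  ultimately show ?thesis by blast
qed


lemma K_diter:
  assumes "in_K F G"
  shows "in_K F (diter D G)"
proof (rule K_intro)
  show "smooth_fun (diter D G)" using assms smooth_diter unfolding in_K_def by blast
  fix g m
  obtain B where B: "\<And>D' z. length D' \<le> m + length D \<Longrightarrow> F g z * norm (diter D' G z) \<le> B"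
    using K_bound[OF assms] by blast
  have "F g z * norm (diter D' (diter D G) z) \<le> B" if "length D' \<le> m" for D' z
    using B[of "D' @ D" z] that by (simp add: diter_append)
  then show "\<exists>B. \<forall>D' z. length D' \<le> m \<longrightarrow> F g z * norm (diter D' (diter D G) z) \<le> B" by blast
qed

lemma smooth_zero: "smooth_fun (\<lambda>y::real^'n::finite. 0::complex)"
  by (auto simp: smooth_fun_def diter_zero)

lemma scale_diter:
  fixes g :: "real^'n::finite \<Rightarrow> complex"
  assumes "smooth_fun g"
  shows "diter ds (\<lambda>y. c * g y) = (\<lambda>y. c * diter ds g y)"
  using lin_diter[OF smooth_zero assms, of ds c] by (simp add: diter_zero)

lemma EST:
  fixes M :: "'g \<Rightarrow> real^'k1::finite \<Rightarrow> real"
    and N :: "'w \<Rightarrow> real^'k2::finite \<Rightarrow> real"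
    and H :: "real^('k1 + 'k2) \<Rightarrow> complex"
  assumes dM: "defining_family M" and dN: "defining_family N"
    and I: "\<forall>w. \<exists>w' L. bounded (range L) \<and> integrable lborel L \<and> (\<forall>y. 0 \<le> L y) \<and>
              (\<forall>y. N w y \<le> L y * N w' y) \<and> (L \<longlongrightarrow> 0) at_infinity"
    and H: "in_K (tensor_family M N) H" and F: "finite F" and e: "e > 0"
  shows "eventually (\<lambda>x'. \<forall>(w,m)\<in>F. \<forall>ds\<in>{ds::'k2 list. set ds \<subseteq> UNIV \<and> length ds \<le> m}. \<forall>y.
            N w y * norm (diter (map Inr ds) H (vjoin x' y) - diter (map Inr ds) H (vjoin x y)) \<le> e) (nhds x)"
proof -
  have one: "eventually (\<lambda>x'. \<forall>y. N w y * norm (diter (map Inr ds) H (vjoin x' y) - diter (map Inr ds) H (vjoin x y)) \<le> e) (nhds x)"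
    for w and ds :: "'k2 list"
  proof -
    have sm: "smooth_fun H" using H unfolding in_K_def by blast
    have bd: "\<exists>B. \<forall>x y. M g x * N w' y * norm (diter (map Inr ds) H (vjoin x y)) \<le> B" for g w'
    proof -
      obtain B where B: "\<And>D z. length D \<le> length ds \<Longrightarrow> tensor_family M N (g, w') z * norm (diter D H z) \<le> B"
        using K_bound[OF H] by blast
      have "M g x * N w' y * norm (diter (map Inr ds) H (vjoin x y)) \<le> B" for x y
        using B[of "map Inr ds" "vjoin x y"] by (simp add: tensor_vjoin)
      then show ?thesis by blast
    qed
    obtain \<delta> where "\<delta> > 0" "\<forall>x' y. dist x' x < \<delta> \<longrightarrow> N w y * norm (diter (map Inr ds) H (vjoin x' y) - diter (map Inr ds) H (vjoin x y)) \<le> e"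
      using UE[OF dM dN I smooth_cont[OF sm] bd e] by blast
    then show ?thesis unfolding eventually_nhds_metric by blast
  qed
  show ?thesis
  proof (rule eventually_ball_finite[OF F], safe)
    fix w m
    show "eventually (\<lambda>x'. \<forall>ds\<in>{ds::'k2 list. set ds \<subseteq> UNIV \<and> length ds \<le> m}. \<forall>y.
            N w y * norm (diter (map Inr ds) H (vjoin x' y) - diter (map Inr ds) H (vjoin x y)) \<le> e) (nhds x)"
      by (rule eventually_ball_finite[OF finite_lists_length_le[OF finite_class.finite_UNIV]]) (use one in blast)
  qed
qed


lemma count_Inl: "count_list (map Inl ds) (Inl a) = count_list ds a"
  by (induction ds) auto
lemma count_Inl_Inr: "count_list (map Inl ds) (Inr b) = 0"
  by (induction ds) auto

lemma Gv_cont: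
  fixes M :: "'g \<Rightarrow> real^'k1::finite \<Rightarrow> real"
    and N :: "'w \<Rightarrow> real^'k2::finite \<Rightarrow> real"
    and G :: "real^('k1 + 'k2) \<Rightarrow> complex"
  assumes dM: "defining_family M" and dN: "defining_family N"
    and I: "\<forall>w. \<exists>w' L. bounded (range L) \<and> integrable lborel L \<and> (\<forall>y. 0 \<le> L y) \<and>
              (\<forall>y. N w y \<le> L y * N w' y) \<and> (L \<longlongrightarrow> 0) at_infinity"
    and v: "in_K_dual N v" and G: "in_K (tensor_family M N) G"
  shows "continuous_on UNIV (\<lambda>x. v (\<lambda>y. G (vjoin x y)))"
proof (intro continuous_at_imp_continuous_on ballI)
  fix x :: "real^'k1"
  have N0: "\<forall>w y. 0 \<le> N w y" using dN unfolding defining_family_def by auto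
  have sm: "smooth_fun G" using G unfolding in_K_def by blast
  obtain F where F: "finite F" "\<And>e. e > 0 \<Longrightarrow> \<exists>e'>0. \<forall>f. in_K N f \<longrightarrow>
           (\<forall>(w,m)\<in>F. \<forall>y ds. length ds \<le> m \<longrightarrow> N w y * norm (diter ds f y) \<le> e') \<longrightarrow> norm (v f) \<le> e"
    using v_small[OF v] by blast
  show "isCont (\<lambda>x. v (\<lambda>y. G (vjoin x y))) x"
    unfolding isCont_def tendsto_iff
  proof (intro allI impI)
    fix e :: real assume e: "e > 0"
    obtain e' where e': "e' > 0" "\<And>f. in_K N f \<Longrightarrow>
           (\<forall>(w,m)\<in>F. \<forall>y ds. length ds \<le> m \<longrightarrow> N w y * norm (diter ds f y) \<le> e') \<Longrightarrow> norm (v f) \<le> e / 2"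
      using F(2)[of "e/2"] e by auto
    have ev: "eventually (\<lambda>x'. \<forall>(w,m)\<in>F. \<forall>ds\<in>{ds::'k2 list. set ds \<subseteq> UNIV \<and> length ds \<le> m}. \<forall>y.
            N w y * norm (diter (map Inr ds) G (vjoin x' y) - diter (map Inr ds) G (vjoin x y)) \<le> e') (nhds x)"
      by (rule EST[OF dM dN I G F(1) e'(1)])
    have "dist (v (\<lambda>y. G (vjoin x' y))) (v (\<lambda>y. G (vjoin x y))) < e"
      if P: "\<forall>(w,m)\<in>F. \<forall>ds\<in>{ds::'k2 list. set ds \<subseteq> UNIV \<and> length ds \<le> m}. \<forall>y.
            N w y * norm (diter (map Inr ds) G (vjoin x' y) - diter (map Inr ds) G (vjoin x y)) \<le> e'" for x'
    proof -
      have K1: "in_K N (\<lambda>y. G (vjoin x' y))" and K0: "in_K N (\<lambda>y. G (vjoin x y))"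
        using restr_K[OF dM N0 G] by blast+
      have sm1: "smooth_fun (\<lambda>y. G (vjoin x' y))" and sm0: "smooth_fun (\<lambda>y. G (vjoin x y))"
        using K1 K0 unfolding in_K_def by blast+
      have "norm (v (\<lambda>y. G (vjoin x' y) + (-1) * G (vjoin x y))) \<le> e / 2"
      proof (rule e'(2))
        show "in_K N (\<lambda>y. G (vjoin x' y) + (-1) * G (vjoin x y))" by (rule K_lin[OF N0 K1 K0])
        show "\<forall>(w,m)\<in>F. \<forall>y ds. length ds \<le> m \<longrightarrow> N w y * norm (diter ds (\<lambda>y. G (vjoin x' y) + (-1) * G (vjoin x y)) y) \<le> e'"
          unfolding lin_diter[OF sm1 sm0] restr_diter using P by auto
      qed
      then have "norm (v (\<lambda>y. G (vjoin x' y)) - v (\<lambda>y. G (vjoin x y))) \<le> e / 2"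
        unfolding v_lin[OF N0 v K1 K0] by simp
      then show ?thesis using e by (simp add: dist_norm)
    qed
    then show "eventually (\<lambda>x'. dist (v (\<lambda>y. G (vjoin x' y))) (v (\<lambda>y. G (vjoin x y))) < e) (at x)"
      using ev unfolding eventually_at_filter by (auto elim!: eventually_mono)
  qed
qed


lemma mvt_step:
  fixes Kf :: "real^('k1::finite + 'k2::finite) \<Rightarrow> complex"
  assumes sm: "smooth_fun Kf" and n0: "0 \<le> n"
    and bd: "\<And>s. \<bar>s\<bar> \<le> \<bar>t\<bar> \<Longrightarrow> n * norm (dpart (Inl i) Kf (vjoin (x + s *\<^sub>R axis i 1) y) - dpart (Inl i) Kf (vjoin x y)) \<le> e'"
  shows "n * norm (Kf (vjoin (x + t *\<^sub>R axis i 1) y) - Kf (vjoin x y) - of_real t * dpart (Inl i) Kf (vjoin x y)) \<le> \<bar>t\<bar> * e'"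
proof (cases "n = 0")
  case True
  have "0 \<le> e'" using bd[of 0] True by simp
  then show ?thesis using True by simp
next
  case False
  then have n: "n > 0" using n0 by simp
  have "norm ((\<lambda>s. Kf (vjoin (x + s *\<^sub>R axis i 1) y)) t - (\<lambda>s. Kf (vjoin (x + s *\<^sub>R axis i 1) y)) 0
      - (t - 0) *\<^sub>R (\<lambda>s. dpart (Inl i) Kf (vjoin (x + s *\<^sub>R axis i 1) y)) 0) \<le> norm (t - 0) * (e' / n)"
  proof (rule vector_differentiable_bound_linearization[where S="closed_segment 0 t" and f="\<lambda>s. Kf (vjoin (x + s *\<^sub>R axis i 1) y)" and f'="\<lambda>s. dpart (Inl i) Kf (vjoin (x + s *\<^sub>R axis i 1) y)"])
    fix s assume s: "s \<in> closed_segment 0 t"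
    have "((\<lambda>s. Kf (vjoin x y + s *\<^sub>R axis (Inl i) 1)) has_vector_derivative dpart (Inl i) Kf (vjoin x y + s *\<^sub>R axis (Inl i) 1)) (at s)"
      by (rule smooth_vd[OF sm])
    then show "((\<lambda>s. Kf (vjoin (x + s *\<^sub>R axis i 1) y)) has_vector_derivative dpart (Inl i) Kf (vjoin (x + s *\<^sub>R axis i 1) y)) (at s within closed_segment 0 t)"
      unfolding vjoin_Inl by (rule has_vector_derivative_at_within)
    have "\<bar>s\<bar> \<le> \<bar>t\<bar>" using s by (auto simp: closed_segment_eq_real_ivl split: if_splits)
    then have "n * norm (dpart (Inl i) Kf (vjoin (x + s *\<^sub>R axis i 1) y) - dpart (Inl i) Kf (vjoin (x + 0 *\<^sub>R axis i 1) y)) \<le> e'"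
      using bd by simp
    then show "norm (dpart (Inl i) Kf (vjoin (x + s *\<^sub>R axis i 1) y) - dpart (Inl i) Kf (vjoin (x + 0 *\<^sub>R axis i 1) y)) \<le> e' / n"
      using n by (simp add: field_simps mult.commute)
  qed auto
  then have "norm (Kf (vjoin (x + t *\<^sub>R axis i 1) y) - Kf (vjoin x y) - of_real t * dpart (Inl i) Kf (vjoin x y)) \<le> \<bar>t\<bar> * (e' / n)"
    by (simp add: scaleR_conv_of_real)
  then have "n * norm (Kf (vjoin (x + t *\<^sub>R axis i 1) y) - Kf (vjoin x y) - of_real t * dpart (Inl i) Kf (vjoin x y)) \<le> n * (\<bar>t\<bar> * (e' / n))"
    using n by (intro mult_left_mono) auto
  then show ?thesis using n by simp
qed


lemma norm_axis_scale: "dist (x + s *\<^sub>R axis i (1::real)) x = \<bar>s\<bar>"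
  by (simp add: dist_norm)

lemma Gv_deriv:
  fixes M :: "'g \<Rightarrow> real^'k1::finite \<Rightarrow> real"
    and N :: "'w \<Rightarrow> real^'k2::finite \<Rightarrow> real"
    and G :: "real^('k1 + 'k2) \<Rightarrow> complex"
  assumes dM: "defining_family M" and dN: "defining_family N"
    and I: "\<forall>w. \<exists>w' L. bounded (range L) \<and> integrable lborel L \<and> (\<forall>y. 0 \<le> L y) \<and>
              (\<forall>y. N w y \<le> L y * N w' y) \<and> (L \<longlongrightarrow> 0) at_infinity"
    and v: "in_K_dual N v" and G: "in_K (tensor_family M N) G"
  shows "((\<lambda>t. v (\<lambda>y. G (vjoin (x + t *\<^sub>R axis i 1) y))) has_vector_derivative v (\<lambda>y. dpart (Inl i) G (vjoin x y))) (at 0)"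
proof -
  have N0: "\<forall>w y. 0 \<le> N w y" using dN unfolding defining_family_def by auto
  have sm: "smooth_fun G" using G unfolding in_K_def by blast
  have Gi: "in_K (tensor_family M N) (dpart (Inl i) G)" using K_diter[OF G, of "[Inl i]"] by simp
  have smi: "smooth_fun (dpart (Inl i) G)" using Gi unfolding in_K_def by blast
  obtain F where F: "finite F" "\<And>e. e > 0 \<Longrightarrow> \<exists>e'>0. \<forall>f. in_K N f \<longrightarrow>
           (\<forall>(w,m)\<in>F. \<forall>y ds. length ds \<le> m \<longrightarrow> N w y * norm (diter ds f y) \<le> e') \<longrightarrow> norm (v f) \<le> e"
    using v_small[OF v] by blast
  define A where "A = v (\<lambda>y. dpart (Inl i) G (vjoin x y))"
  define f where "f t = v (\<lambda>y. G (vjoin (x + t *\<^sub>R axis i 1) y))" for t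
  have "((\<lambda>t. norm (f t - f 0 - (t - 0) *\<^sub>R A) / norm (t - 0)) \<longlongrightarrow> 0) (at 0)"
    unfolding tendsto_iff
  proof (intro allI impI)
    fix e :: real assume e: "e > 0"
    obtain e' where e': "e' > 0" "\<And>f. in_K N f \<Longrightarrow>
           (\<forall>(w,m)\<in>F. \<forall>y ds. length ds \<le> m \<longrightarrow> N w y * norm (diter ds f y) \<le> e') \<Longrightarrow> norm (v f) \<le> e / 2"
      using F(2)[of "e/2"] e by auto
    have "eventually (\<lambda>x'. \<forall>(w,m)\<in>F. \<forall>ds\<in>{ds::'k2 list. set ds \<subseteq> UNIV \<and> length ds \<le> m}. \<forall>y.
            N w y * norm (diter (map Inr ds) (dpart (Inl i) G) (vjoin x' y) - diter (map Inr ds) (dpart (Inl i) G) (vjoin x y)) \<le> e') (nhds x)"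
      by (rule EST[OF dM dN I Gi F(1) e'(1)])
    then obtain \<delta> where \<delta>: "\<delta> > 0" "\<And>x'. dist x' x < \<delta> \<Longrightarrow> \<forall>(w,m)\<in>F. \<forall>ds\<in>{ds::'k2 list. set ds \<subseteq> UNIV \<and> length ds \<le> m}. \<forall>y.
            N w y * norm (diter (map Inr ds) (dpart (Inl i) G) (vjoin x' y) - diter (map Inr ds) (dpart (Inl i) G) (vjoin x y)) \<le> e'"
      unfolding eventually_nhds_metric by blast
    have "dist (norm (f t - f 0 - (t - 0) *\<^sub>R A) / norm (t - 0)) 0 < e" if t: "t \<noteq> 0" "dist t 0 < \<delta>" for t
    proof -
      define r1 where "r1 = (\<lambda>y. G (vjoin (x + t *\<^sub>R axis i 1) y))"
      define r0 where "r0 = (\<lambda>y. G (vjoin x y))"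
      define rA where "rA = (\<lambda>y. dpart (Inl i) G (vjoin x y))"
      define P where "P = (\<lambda>y. (\<lambda>y. r1 y + (-1) * r0 y) y + (- of_real t) * rA y)"
      define ft where "ft = (\<lambda>y. (1 / of_real t) * P y)"
      have K1: "in_K N r1" and K0: "in_K N r0" unfolding r1_def r0_def using restr_K[OF dM N0 G] by blast+
      have KA: "in_K N rA" unfolding rA_def using restr_K[OF dM N0 Gi] by blast
      have K10: "in_K N (\<lambda>y. r1 y + (-1) * r0 y)" by (rule K_lin[OF N0 K1 K0])
      have KP: "in_K N P" unfolding P_def by (rule K_lin[OF N0 K10 KA])
      have Kft: "in_K N ft" unfolding ft_def by (rule K_scale[OF N0 KP])
      have s1: "smooth_fun r1" "smooth_fun r0" "smooth_fun rA" "smooth_fun (\<lambda>y. r1 y + (-1) * r0 y)" "smooth_fun P"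
        using K1 K0 KA K10 KP unfolding in_K_def by blast+
      have "norm (v ft) \<le> e / 2"
      proof (rule e'(2)[OF Kft], safe)
        fix w m y and ds :: "'k2 list" assume wm: "(w, m) \<in> F" and ds: "length ds \<le> m"
        define Kf where "Kf = diter (map Inr ds) G"
        have smK: "smooth_fun Kf" unfolding Kf_def by (rule smooth_diter[OF sm])
        have dK: "dpart (Inl i) Kf = diter (map Inr ds) (dpart (Inl i) G)"
        proof -
          have "dpart (Inl i) Kf = diter (Inl i # map Inr ds) G" by (simp add: Kf_def)
          also have "\<dots> = diter (map Inr ds @ [Inl i]) G" by (rule diter_perm[OF sm]) simp
          finally show ?thesis by (simp add: diter_append)
        qed
        have "N w y * norm (Kf (vjoin (x + t *\<^sub>R axis i 1) y) - Kf (vjoin x y) - of_real t * dpart (Inl i) Kf (vjoin x y)) \<le> \<bar>t\<bar> * e'"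
        proof (rule mvt_step[OF smK])
          show "0 \<le> N w y" using N0 by simp
          fix s assume "\<bar>s\<bar> \<le> \<bar>t\<bar>"
          then have "dist (x + s *\<^sub>R axis i 1) x < \<delta>" using t by (simp add: norm_axis_scale)
          from \<delta>(2)[OF this] wm ds
          show "N w y * norm (dpart (Inl i) Kf (vjoin (x + s *\<^sub>R axis i 1) y) - dpart (Inl i) Kf (vjoin x y)) \<le> e'"
            unfolding dK by auto
        qed
        moreover have "diter ds ft y = (1 / of_real t) * (Kf (vjoin (x + t *\<^sub>R axis i 1) y) - Kf (vjoin x y) - of_real t * dpart (Inl i) Kf (vjoin x y))"
          unfolding ft_def unfolding scale_diter[OF s1(5)] unfolding P_def unfolding lin_diter[OF s1(4) s1(3)]
          unfolding lin_diter[OF s1(1) s1(2)]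
          unfolding r1_def r0_def rA_def unfolding restr_diter unfolding dK unfolding Kf_def by (simp add: algebra_simps)
        ultimately show "N w y * norm (diter ds ft y) \<le> e'"
        proof -
          assume h1: "N w y * norm (Kf (vjoin (x + t *\<^sub>R axis i 1) y) - Kf (vjoin x y) - of_real t * dpart (Inl i) Kf (vjoin x y)) \<le> \<bar>t\<bar> * e'"
            and h2: "diter ds ft y = (1 / of_real t) * (Kf (vjoin (x + t *\<^sub>R axis i 1) y) - Kf (vjoin x y) - of_real t * dpart (Inl i) Kf (vjoin x y))"
          define Z where "Z = Kf (vjoin (x + t *\<^sub>R axis i 1) y) - Kf (vjoin x y) - of_real t * dpart (Inl i) Kf (vjoin x y)"
          have "N w y * norm (diter ds ft y) = (N w y * norm Z) / \<bar>t\<bar>"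
            unfolding h2 Z_def[symmetric] by (simp add: norm_mult norm_divide)
          also have "\<dots> \<le> (\<bar>t\<bar> * e') / \<bar>t\<bar>" using h1 t(1) unfolding Z_def[symmetric] by (intro divide_right_mono) auto
          also have "\<dots> = e'" using t(1) by simp
          finally show ?thesis .
        qed
      qed
      moreover have "v ft = (1 / of_real t) * (f t - f 0 - (t - 0) *\<^sub>R A)"
      proof -
        have "v ft = (1 / of_real t) * v P" unfolding ft_def using v KP unfolding in_K_dual_def by blast
        also have "v P = (v r1 + (-1) * v r0) + (- of_real t) * v rA"
          unfolding P_def v_lin[OF N0 v K10 KA] v_lin[OF N0 v K1 K0] ..
        finally show ?thesis by (simp add: f_def A_def r1_def r0_def rA_def scaleR_conv_of_real algebra_simps)
      qed
      ultimately have "norm (f t - f 0 - (t - 0) *\<^sub>R A) / norm (t - 0) \<le> e / 2"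
        using t(1) by (simp add: norm_mult norm_divide field_simps)
      then have lt: "norm (f t - f 0 - (t - 0) *\<^sub>R A) / norm (t - 0) < e" using e by linarith
      have ge: "0 \<le> norm (f t - f 0 - (t - 0) *\<^sub>R A) / norm (t - 0)" by simp
      have gen: "\<And>q::real. 0 \<le> q \<Longrightarrow> q < e \<Longrightarrow> dist q 0 < e" by simp
      show ?thesis by (rule gen[OF ge lt])
    qed
    then show "eventually (\<lambda>t. dist (norm (f t - f 0 - (t - 0) *\<^sub>R A) / norm (t - 0)) 0 < e) (at 0)"
      unfolding eventually_at using \<delta>(1) by blast
  qed
  then have "(f has_derivative (\<lambda>t. t *\<^sub>R A)) (at 0)"
    unfolding has_derivative_iff_norm by (auto intro: bounded_linear_scaleR_left)
  then show ?thesis unfolding has_vector_derivative_def f_def A_def .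
qed


context
  fixes M :: "'g \<Rightarrow> real^'k1::finite \<Rightarrow> real"
    and N :: "'w \<Rightarrow> real^'k2::finite \<Rightarrow> real"
    and h :: "real^('k1 + 'k2) \<Rightarrow> complex"
    and v :: "(real^'k2 \<Rightarrow> complex) \<Rightarrow> complex"
  assumes dM: "defining_family M" and dN: "defining_family N"
    and hK: "in_K (tensor_family M N) h"
    and I: "\<forall>w. \<exists>w' L. bounded (range L) \<and> integrable lborel L \<and> (\<forall>y. 0 \<le> L y) \<and>
              (\<forall>y. N w y \<le> L y * N w' y) \<and> (L \<longlongrightarrow> 0) at_infinity"
    and v: "in_K_dual N v"
begin

lemma diter_hv: "diter ds (\<lambda>x. v (\<lambda>y. h (vjoin x y))) = (\<lambda>x. v (\<lambda>y. diter (map Inl ds) h (vjoin x y)))"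
proof (induction ds)
  case Nil then show ?case by simp
next
  case (Cons i ds)
  have G: "in_K (tensor_family M N) (diter (map Inl ds) h)" by (rule K_diter[OF hK])
  have "dpart i (\<lambda>x. v (\<lambda>y. diter (map Inl ds) h (vjoin x y))) = (\<lambda>x. v (\<lambda>y. dpart (Inl i) (diter (map Inl ds) h) (vjoin x y)))"
  proof
    fix x
    show "dpart i (\<lambda>x. v (\<lambda>y. diter (map Inl ds) h (vjoin x y))) x = v (\<lambda>y. dpart (Inl i) (diter (map Inl ds) h) (vjoin x y))"
      unfolding dpart_def[of i] by (rule vector_derivative_at[OF Gv_deriv[OF dM dN I v G]])
  qed
  then show ?case using Cons by simp
qed

lemma hv_smooth: "smooth_fun (\<lambda>x. v (\<lambda>y. h (vjoin x y)))"
  unfolding smooth_fun_def diter_hv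
proof (intro allI conjI)
  fix ds
  have G: "in_K (tensor_family M N) (diter (map Inl ds) h)" by (rule K_diter[OF hK])
  show "continuous_on UNIV (\<lambda>x. v (\<lambda>y. diter (map Inl ds) h (vjoin x y)))"
    by (rule Gv_cont[OF dM dN I v G])
  fix i x
  show "(\<lambda>t. v (\<lambda>y. diter (map Inl ds) h (vjoin (x + t *\<^sub>R axis i 1) y))) differentiable at 0"
    using Gv_deriv[OF dM dN I v G] differentiableI_vector by blast
qed

lemma hv_K: "in_K M (\<lambda>x. v (\<lambda>y. h (vjoin x y)))"
proof (rule K_intro[OF hv_smooth])
  fix g m
  have N0: "\<forall>w y. 0 \<le> N w y" using dN unfolding defining_family_def by auto
  have M0: "\<And>x. 0 \<le> M g x" using dM unfolding defining_family_def by auto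
  obtain F C where F: "finite F" "C \<ge> 0" "\<And>f. in_K N f \<Longrightarrow> norm (v f) \<le> C * (\<Sum>(w,m)\<in>F. seminorm_K N w m f)"
    using v_bound[OF v] by blast
  define Bp where "Bp w m' = (SOME B. \<forall>D z. length D \<le> m + m' \<longrightarrow> tensor_family M N (g, w) z * norm (diter D h z) \<le> B)" for w m'
  have Bp: "\<And>D z. length D \<le> m + m' \<Longrightarrow> tensor_family M N (g, w) z * norm (diter D h z) \<le> Bp w m'" for w m'
  proof -
    have "\<forall>D z. length D \<le> m + m' \<longrightarrow> tensor_family M N (g, w) z * norm (diter D h z) \<le> Bp w m'"
      unfolding Bp_def by (rule someI_ex[OF K_bound[OF hK]])
    then show "\<And>D z. length D \<le> m + m' \<Longrightarrow> tensor_family M N (g, w) z * norm (diter D h z) \<le> Bp w m'" by blast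
  qed
  have "M g x * norm (diter D (\<lambda>x. v (\<lambda>y. h (vjoin x y))) x) \<le> C * (\<Sum>(w,m')\<in>F. max 0 (Bp w m'))"
    if D: "length D \<le> m" for D x
  proof -
    define G where "G = diter (map Inl D) h"
    have G: "in_K (tensor_family M N) G" unfolding G_def by (rule K_diter[OF hK])
    have rK: "in_K N (\<lambda>y. G (vjoin x y))" by (rule restr_K[OF dM N0 G])
    have sem: "M g x * seminorm_K N w m' (\<lambda>y. G (vjoin x y)) \<le> max 0 (Bp w m')" for w m'
    proof (cases "M g x = 0")
      case True then show ?thesis by simp
    next
      case False
      then have Mp: "M g x > 0" using M0[of x] by simp
      have "seminorm_K N w m' (\<lambda>y. G (vjoin x y)) \<le> max 0 (Bp w m') / M g x"
      proof (rule seminorm_le)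
        fix y and ds :: "'k2 list" assume ds: "length ds \<le> m'"
        have "M g x * (N w y * norm (diter ds (\<lambda>y. G (vjoin x y)) y))
            = tensor_family M N (g, w) (vjoin x y) * norm (diter (map Inr ds @ map Inl D) h (vjoin x y))"
          by (simp add: restr_diter G_def diter_append tensor_vjoin)
        also have "\<dots> \<le> Bp w m'" by (rule Bp) (use ds D in simp)
        also have "\<dots> \<le> max 0 (Bp w m')" by simp
        finally show "N w y * norm (diter ds (\<lambda>y. G (vjoin x y)) y) \<le> max 0 (Bp w m') / M g x"
          using Mp by (simp add: field_simps mult.commute)
      qed
      then show ?thesis using Mp by (simp add: field_simps mult.commute)
    qed
    have "M g x * norm (diter D (\<lambda>x. v (\<lambda>y. h (vjoin x y))) x) = M g x * norm (v (\<lambda>y. G (vjoin x y)))"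
      by (simp add: diter_hv G_def)
    also have "\<dots> \<le> M g x * (C * (\<Sum>(w,m')\<in>F. seminorm_K N w m' (\<lambda>y. G (vjoin x y))))"
      using F(3)[OF rK] M0[of x] by (rule mult_left_mono)
    also have "\<dots> = C * (\<Sum>(w,m')\<in>F. M g x * seminorm_K N w m' (\<lambda>y. G (vjoin x y)))"
      by (simp add: sum_distrib_left case_prod_beta algebra_simps)
    also have "\<dots> \<le> C * (\<Sum>(w,m')\<in>F. max 0 (Bp w m'))"
      using F(2) sem by (intro mult_left_mono sum_mono) (auto simp: case_prod_beta)
    finally show ?thesis .
  qed
  then show "\<exists>B. \<forall>D x. length D \<le> m \<longrightarrow> M g x * norm (diter D (\<lambda>x. v (\<lambda>y. h (vjoin x y))) x) \<le> B"
    by blast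
qed

lemma hv_dmulti: "dmulti mu (\<lambda>x. v (\<lambda>y. h (vjoin x y))) x
                    = v (\<lambda>y. dmulti (mi_lift_left mu :: 'k1 + 'k2 \<Rightarrow> nat) h (vjoin x y))"
proof -
  define ds where "ds = (SOME ds. \<forall>i. count_list ds i = mu i)"
  have cnt: "\<forall>i. count_list ds i = mu i" unfolding ds_def by (rule dmulti_some)
  have sm: "smooth_fun h" using hK unfolding in_K_def by blast
  have "dmulti (mi_lift_left mu :: 'k1 + 'k2 \<Rightarrow> nat) h = diter (map Inl ds) h"
    by (rule dmulti_eq[OF sm]) (auto simp: mi_lift_left_def count_Inl count_Inl_Inr cnt split: sum.split)
  moreover have "dmulti mu (\<lambda>x. v (\<lambda>y. h (vjoin x y))) = diter ds (\<lambda>x. v (\<lambda>y. h (vjoin x y)))"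
    unfolding dmulti_def ds_def ..
  ultimately show ?thesis by (simp add: diter_hv)
qed

end

theorem lemma3p5:
  fixes M :: "'g \<Rightarrow> real^'k1::finite \<Rightarrow> real"
    and N :: "'w \<Rightarrow> real^'k2::finite \<Rightarrow> real"
    and h :: "real^('k1 + 'k2) \<Rightarrow> complex"
  assumes "defining_family M" and "defining_family N"
    and "in_K (tensor_family M N) h"
    and I: "\<forall>w. \<exists>w' L. bounded (range L) \<and> integrable lborel L \<and> (\<forall>y. 0 \<le> L y) \<and>
              (\<forall>y. N w y \<le> L y * N w' y) \<and> (L \<longlongrightarrow> 0) at_infinity"
    and II: "\<forall>w. \<exists>w' B C. open B \<and> 0 \<in> B \<and> C > 0 \<and>
              (\<forall>y y'. y' \<in> B \<longrightarrow> N w y \<le> C * N w' (y + y'))"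
  shows "(\<forall>x. in_K N (\<lambda>y. h (vjoin x y))) \<and>
         (\<forall>v. in_K_dual N v \<longrightarrow>
            in_K M (\<lambda>x. v (\<lambda>y. h (vjoin x y))) \<and>
            (\<forall>mu x. dmulti mu (\<lambda>x. v (\<lambda>y. h (vjoin x y))) x
                    = v (\<lambda>y. dmulti (mi_lift_left mu :: 'k1 + 'k2 \<Rightarrow> nat) h (vjoin x y))))"
proof (intro conjI allI impI)
  have N0: "\<forall>w y. 0 \<le> N w y" using assms(2) unfolding defining_family_def by auto
  fix x show "in_K N (\<lambda>y. h (vjoin x y))" by (rule restr_K[OF assms(1) N0 assms(3)])
next
  fix v assume v: "in_K_dual N v"
  show "in_K M (\<lambda>x. v (\<lambda>y. h (vjoin x y)))" by (rule hv_K[OF assms(1,2,3) I v])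
  fix mu x
  show "dmulti mu (\<lambda>x. v (\<lambda>y. h (vjoin x y))) x
                    = v (\<lambda>y. dmulti (mi_lift_left mu :: 'k1 + 'k2 \<Rightarrow> nat) h (vjoin x y))"
    by (rule hv_dmulti[OF assms(1,2,3) I v])
qed

end
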